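(* Let $\varphi$ be an automorphism of $F_n$ with basis $A$. Then $\varphi$ is almost length-increasing if and only if $|a\varphi|=1$ for every $a\in A$.
   Context: Elements of $F_n$ are identified with reduced words over $A\cup A^{-1}$ and $|u|$ denotes length; maps are written on the right. An endomorphism $\varphi$ of $F_n$ is almost length-increasing if $|u\varphi|<|u|$ for only finitely many $u\in F_n$. *)

theory Defs
  imports "HOL-Algebra.Group"
begin

text \<open>Letters of A \<union> A^-1 with A = {0..<n}: (a, False) is the generator a,
  (a, True) is its inverse. Elements of F_n are reduced words.\<close>

type_synonym letter = "nat \<times> bool"
type_synonym word = "letter list"

definition inv_letter :: "letter \<Rightarrow> letter" where
  "inv_letter x = (fst x, \<not> snd x)"

fun reduced :: "word \<Rightarrow> bool" where
  "reduced [] = True"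
| "reduced [x] = True"
| "reduced (x # y # ys) = (y \<noteq> inv_letter x \<and> reduced (y # ys))"

fun red :: "word \<Rightarrow> word" where
  "red [] = []"
| "red (x # xs) = (case red xs of
       [] \<Rightarrow> [x]
     | y # ys \<Rightarrow> (if y = inv_letter x then ys else x # y # ys))"

definition Fn_words :: "nat \<Rightarrow> word set" where
  "Fn_words n = {w. reduced w \<and> (\<forall>x\<in>set w. fst x < n)}"

definition free_group :: "nat \<Rightarrow> word monoid" where
  "free_group n = \<lparr>carrier = Fn_words n, mult = (\<lambda>u v. red (u @ v)), one = []\<rparr>"

definition almost_length_increasing :: "nat \<Rightarrow> (word \<Rightarrow> word) \<Rightarrow> bool" where
  "almost_length_increasing n \<phi> \<longleftrightarrow>
     finite {u \<in> Fn_words n. length (\<phi> u) < length u}"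

end

theory Submission
  imports Defs
begin

lemma red_reduced: "reduced w \<Longrightarrow> red w = w"
  by (induction w rule: reduced.induct) auto

lemma reduced_tl: "reduced (y # ys) \<Longrightarrow> reduced ys"
  by (cases ys) auto

lemma reduced_red: "reduced (red w)"
proof (induction w)
  case Nil then show ?case by simp
next
  case (Cons x xs) then show ?case
    by (cases "red xs") (auto dest: reduced_tl)
qed

lemma set_red: "set (red w) \<subseteq> set w"
proof (induction w)
  case Nil then show ?case by simp
next
  case (Cons x xs) then show ?case
    by (cases "red xs") auto
qed

lemma length_red: "length (red w) \<le> length w"
proof (induction w)
  case Nil then show ?case by simp
next
  case (Cons x xs) then show ?case
    by (cases "red xs") auto
qed

lemma red_in: "u \<in> Fn_words n \<Longrightarrow> v \<in> Fn_words n \<Longrightarrow> red (u @ v) \<in> Fn_words n"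
  using reduced_red set_red unfolding Fn_words_def by fastforce

lemma inv_ne: "x \<noteq> inv_letter x"
  by (cases x) (simp add: inv_letter_def)

lemma reduced_rep: "reduced (x # w) \<Longrightarrow> reduced (x # replicate K x @ w)"
  using inv_ne[of x] by (induction K) auto

theorem mainTheorem8:
  fixes n :: nat and \<phi> :: "word \<Rightarrow> word"
  assumes "\<phi> \<in> iso (free_group n) (free_group n)"
  shows "almost_length_increasing n \<phi> \<longleftrightarrow> (\<forall>a<n. length (\<phi> [(a, False)]) = 1)"
proof -
  let ?C = "Fn_words n"
  have hom: "\<And>x y. x\<in>?C \<Longrightarrow> y\<in>?C \<Longrightarrow> \<phi> (red (x@y)) = red (\<phi> x @ \<phi> y)"
    and cl: "\<And>x. x\<in>?C \<Longrightarrow> \<phi> x \<in> ?C" and bij: "bij_betw \<phi> ?C ?C"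
    using assms unfolding iso_def hom_def free_group_def by auto
  have inj: "inj_on \<phi> ?C" and surj: "\<phi> ` ?C = ?C" using bij unfolding bij_betw_def by auto
  have redC: "\<And>u. u \<in> ?C \<Longrightarrow> red u = u" using red_reduced Fn_words_def by auto
  have nil: "[] \<in> ?C" by (simp add: Fn_words_def)
  have phinil: "\<phi> [] = []"
  proof -
    have "[] \<in> \<phi> ` ?C" using surj nil by simp
    then obtain u where u: "u\<in>?C" "\<phi> u = []" by auto
    have "\<phi> u = red (\<phi> u @ \<phi> [])" using hom[OF u(1) nil] redC[OF u(1)] by simp
    then have "[] = red (\<phi> [])" using u by simp
    also have "red (\<phi> []) = \<phi> []" using cl[OF nil] redC by auto
    finally show ?thesis by simp
  qed
  have letter: "\<And>a b. a < n \<Longrightarrow> [(a,b)] \<in> ?C" by (simp add: Fn_words_def)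
  show ?thesis
  proof
    assume ali: "almost_length_increasing n \<phi>"
    define E where "E = {u \<in> ?C. length (\<phi> u) < length u}"
    have fE: "finite E" using ali unfolding almost_length_increasing_def E_def .
    define M where "M = Max (length ` E)"
    have M: "\<And>u. u\<in>E \<Longrightarrow> length u \<le> M" unfolding M_def using fE by simp
    define T where "T L = {u\<in>?C. length u \<le> L}" for L
    have fT: "finite (T L)" for L
    proof -
      have "T L \<subseteq> {xs. set xs \<subseteq> {0..<n} \<times> (UNIV::bool set) \<and> length xs \<le> L}"
        unfolding T_def Fn_words_def by force
      moreover have "finite {xs. set xs \<subseteq> {0..<n} \<times> (UNIV::bool set) \<and> length xs \<le> L}"
        by (rule finite_lists_length_le) simp
      ultimately show ?thesis by (rule finite_subset)
    qed
    have TT: "\<phi> ` T L = T L" if "M \<le> L" for L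
    proof -
      have sub: "T L \<subseteq> \<phi> ` T L"
      proof
        fix v assume v: "v \<in> T L"
        then have "v \<in> \<phi> ` ?C" using surj T_def by auto
        then obtain u where u: "u\<in>?C" "\<phi> u = v" by auto
        have "length u \<le> L"
        proof (cases "u\<in>E")
          case True then show ?thesis using M that by fastforce
        next
          case False then have "length u \<le> length (\<phi> u)" using u E_def by auto
          with v u T_def show ?thesis by auto
        qed
        then show "v \<in> \<phi> ` T L" using u T_def by auto
      qed
      have "inj_on \<phi> (T L)" using inj_on_subset[OF inj] T_def by auto
      then have "card (\<phi> ` T L) = card (T L)" by (rule card_image)
      then show ?thesis using card_subset_eq[OF finite_imageI[OF fT] sub] by simp
    qed
    show "\<forall>a<n. length (\<phi> [(a,False)]) = 1"
    proof (intro allI impI)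
      fix a assume a: "a<n"
      let ?g = "[(a,False)]"
      define w where "w = \<phi> ?g"
      have wC: "w \<in> ?C" using cl letter a w_def by auto
      have wne: "w \<noteq> []"
      proof
        assume "w = []"
        then have "\<phi> ?g = \<phi> []" using w_def phinil by simp
        then have "?g = []" using inj letter[OF a] nil inj_on_def by metis
        then show False by simp
      qed
      then obtain x0 w' where w: "w = x0 # w'" by (cases w) auto
      have x0n: "fst x0 < n" using wC w Fn_words_def by auto
      have wred: "reduced w" using wC Fn_words_def by auto
      define v where "v = replicate M x0"
      have vwred0: "reduced (v @ w)" using reduced_rep[of x0 w' M] wred w v_def
        by (simp add: replicate_app_Cons_same)
      have vred: "reduced v"
        using reduced_rep[of x0 "[]" M] v_def by (cases M) simp_all
      have vC: "v \<in> T M" using vred x0n unfolding v_def T_def Fn_words_def by auto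
      have vwred: "red (v @ w) = v @ w" using vwred0 red_reduced by auto
      obtain u where u: "u \<in> T M" "\<phi> u = v" using TT[of M] vC by (metis imageE order_refl)
      define u2 where "u2 = red (u @ ?g)"
      have uC: "u \<in> ?C" using u T_def by auto
      have u2: "u2 \<in> T (Suc M)"
        using red_in[OF uC letter[OF a]] length_red[of "u @ ?g"] u T_def u2_def by auto
      have "\<phi> u2 = v @ w" using hom[OF uC letter[OF a]] u w_def vwred u2_def by auto
      moreover have "\<phi> u2 \<in> T (Suc M)" using TT[of "Suc M"] u2 by auto
      ultimately have "length (v@w) \<le> Suc M" using T_def by auto
      then have "length w \<le> 1" using v_def by simp
      moreover have "length w \<noteq> 0" using wne by simp
      ultimately have "length w = 1" by linarith
      then show "length (\<phi> ?g) = 1" unfolding w_def .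
    qed
  next
    assume gen: "\<forall>a<n. length (\<phi> [(a,False)]) = 1"
    have pair: "\<exists>y. \<phi> [(a,False)] = [y] \<and> \<phi> [(a,True)] = [inv_letter y]" if a: "a < n" for a
    proof -
      have l1: "length (\<phi> [(a,False)]) = 1" using gen a by simp
      then obtain y where y: "\<phi> [(a,False)] = [y]" by (cases "\<phi> [(a,False)]") auto
      define z where "z = \<phi> [(a,True)]"
      have zred: "red z = z" using redC cl letter[OF a] z_def by auto
      have "red ([(a,False)] @ [(a,True)]) = []" by (simp add: inv_letter_def)
      then have "red (\<phi> [(a,False)] @ \<phi> [(a,True)]) = []"
        using hom[OF letter[OF a] letter[OF a], of False True] phinil by (simp del: red.simps)
      then have "red (y # z) = []" using y z_def by (simp del: red.simps)
      moreover have "red (y # z) = (case red z of [] \<Rightarrow> [y] | u # us \<Rightarrow> (if u = inv_letter y then us else y # u # us))"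
        by (rule red.simps(2))
      ultimately have c: "(case z of [] \<Rightarrow> [y] | u # us \<Rightarrow> (if u = inv_letter y then us else y # u # us)) = []"
        using zred by (simp del: red.simps)
      have "z = [inv_letter y]"
      proof (cases z)
        case Nil then show ?thesis using c by simp
      next
        case (Cons u us) then show ?thesis using c by (simp split: if_splits)
      qed
      then show ?thesis using y z_def by auto
    qed
    define \<sigma> where "\<sigma> x = hd (\<phi> [x])" for x
    have sig: "\<phi> [x] = [\<sigma> x] \<and> \<sigma> (inv_letter x) = inv_letter (\<sigma> x)" if xn: "fst x < n" for x
    proof -
      obtain a b where x: "x = (a,b)" by (cases x)
      obtain y where y: "\<phi> [(a,False)] = [y]" "\<phi> [(a,True)] = [inv_letter y]"
        using pair[of a] xn x by (metis fst_conv)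
      have ii: "inv_letter (inv_letter y) = y" by (simp add: inv_letter_def)
      show ?thesis
      proof (cases b)
        case True
        then have "x = (a,True)" "inv_letter x = (a,False)" using x by (auto simp: inv_letter_def)
        then show ?thesis using y ii unfolding \<sigma>_def by simp
      next
        case False
        then have "x = (a,False)" "inv_letter x = (a,True)" using x by (auto simp: inv_letter_def)
        then show ?thesis using y unfolding \<sigma>_def by simp
      qed
    qed
    have sinj: "x = x'" if "fst x < n" "fst x' < n" "\<sigma> x = \<sigma> x'" for x x'
    proof -
      have "\<phi> [x] = [\<sigma> x]" "\<phi> [x'] = [\<sigma> x']" using sig[OF that(1)] sig[OF that(2)] by blast+
      then have "\<phi> [x] = \<phi> [x']" using that(3) by simp
      moreover have "[x] \<in> ?C" "[x'] \<in> ?C" using that(1,2) by (auto simp: Fn_words_def)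
      ultimately have "[x] = [x']" by (rule inj_onD[OF inj])
      then show ?thesis by simp
    qed
    have main: "\<phi> u = map \<sigma> u \<and> reduced (map \<sigma> u)" if "u \<in> ?C" for u
      using that
    proof (induction u)
      case Nil then show ?case using phinil by simp
    next
      case (Cons x u')
      have xn: "fst x < n" using Cons.prems Fn_words_def by auto
      have u'C: "u' \<in> ?C" using Cons.prems reduced_tl[of x u'] unfolding Fn_words_def by auto
      have IH: "\<phi> u' = map \<sigma> u'" "reduced (map \<sigma> u')" using Cons.IH[OF u'C] by auto
      have xC: "[x] \<in> ?C" using xn by (simp add: Fn_words_def)
      have "red ([x] @ u') = x # u'" using redC[OF Cons.prems] by simp
      then have eq: "\<phi> (x # u') = red (\<sigma> x # map \<sigma> u')"
        using hom[OF xC u'C] sig[OF xn] IH by simp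
      have rr: "reduced (map \<sigma> (x # u'))"
      proof (cases u')
        case Nil then show ?thesis by simp
      next
        case (Cons y ys)
        have yn: "fst y < n" using u'C Cons Fn_words_def by auto
        have "y \<noteq> inv_letter x" using \<open>x # u' \<in> ?C\<close> Cons Fn_words_def by auto
        then have "\<sigma> y \<noteq> \<sigma> (inv_letter x)" using sinj[OF yn, of "inv_letter x"] xn
          by (auto simp: inv_letter_def)
        then have "\<sigma> y \<noteq> inv_letter (\<sigma> x)" using sig[OF xn] by simp
        then show ?thesis using IH(2) Cons by simp
      qed
      then have "red (\<sigma> x # map \<sigma> u') = \<sigma> x # map \<sigma> u'" using red_reduced by (simp del: red.simps)
      then show ?case using eq rr by simp
    qed
    have "{u \<in> ?C. length (\<phi> u) < length u} = {}" using main by auto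
    then show "almost_length_increasing n \<phi>" unfolding almost_length_increasing_def by (metis finite.emptyI)
  qed
qed

end
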